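(* Let $p=\langle P_0,\dots,P_k\rangle$ be a path in an MPDAG $\mathcal G$. Then $p$ is possibly causal if and only if $\mathcal G$ contains no directed path $P_i\leftarrow\cdots\leftarrow P_j$ (i.e. no directed path from $P_j$ to $P_i$) for any $0\le i<j\le k$.
   Context: An MPDAG $\mathcal G$ is a graph with directed ($\to$) and undirected ($-$) edges and no directed cycles, obtained from a CPDAG (the graph representing a Markov equivalence class of DAGs) by orienting some undirected edges and closing under Meek's orientation rules R1–R4; $[\mathcal G]$ is the set of DAGs with the same nodes, adjacencies and directed edges as $\mathcal G$. A path is a sequence of distinct nodes with successive nodes adjacent; a directed path is of the form $A\to\cdots\to B$. A path $\langle V_1,\dots,V_k\rangle$ is possibly causal if $\mathcal G$ contains no edge $V_i\leftarrow V_j$ with $1\le i<j\le k$. *)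

theory Defs
  imports Main
begin

text \<open>A (partially directed) graph on node set nodes, with directed edges
  (a,b) meaning a \<rightarrow> b, and undirected edges stored symmetrically:
  (a,b) and (b,a) both in uedges mean a - b.\<close>

record 'a pdag =
  nodes  :: "'a set"
  dedges :: "('a \<times> 'a) set"
  uedges :: "('a \<times> 'a) set"

definition adj :: "'a pdag \<Rightarrow> 'a \<Rightarrow> 'a \<Rightarrow> bool" where
  "adj G a b \<longleftrightarrow> (a, b) \<in> dedges G \<or> (b, a) \<in> dedges G \<or> (a, b) \<in> uedges G \<or> (b, a) \<in> uedges G"

definition is_dag :: "'a pdag \<Rightarrow> bool" where
  "is_dag D \<longleftrightarrow> finite (nodes D) \<and> dedges D \<subseteq> nodes D \<times> nodes D
      \<and> uedges D = {} \<and> acyclic (dedges D)"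

definition skeleton :: "'a pdag \<Rightarrow> ('a \<times> 'a) set" where
  "skeleton G = {(a, b). adj G a b}"

definition vstructs :: "'a pdag \<Rightarrow> ('a \<times> 'a \<times> 'a) set" where
  "vstructs G = {(a, c, b). (a, c) \<in> dedges G \<and> (b, c) \<in> dedges G \<and> a \<noteq> b \<and> \<not> adj G a b}"

text \<open>Markov equivalence of DAGs, via the Verma--Pearl characterisation
  (same skeleton and same v-structures).\<close>
definition markov_equiv :: "'a pdag \<Rightarrow> 'a pdag \<Rightarrow> bool" where
  "markov_equiv D D' \<longleftrightarrow> is_dag D \<and> is_dag D' \<and> nodes D = nodes D'
      \<and> skeleton D = skeleton D' \<and> vstructs D = vstructs D'"

definition cpdag :: "'a pdag \<Rightarrow> 'a pdag" where
  "cpdag D = \<lparr> nodes = nodes D,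
     dedges = {(a, b). (a, b) \<in> dedges D \<and> (\<forall>D'. markov_equiv D D' \<longrightarrow> (a, b) \<in> dedges D')},
     uedges = {(a, b). adj D a b \<and>
                 \<not> (\<forall>D'. markov_equiv D D' \<longrightarrow> (a, b) \<in> dedges D') \<and>
                 \<not> (\<forall>D'. markov_equiv D D' \<longrightarrow> (b, a) \<in> dedges D')} \<rparr>"

definition und :: "'a pdag \<Rightarrow> 'a \<Rightarrow> 'a \<Rightarrow> bool" where
  "und G a b \<longleftrightarrow> (a, b) \<in> uedges G"

definition orient_edge :: "'a pdag \<Rightarrow> 'a \<Rightarrow> 'a \<Rightarrow> 'a pdag" where
  "orient_edge G a b = G \<lparr> dedges := insert (a, b) (dedges G),
                            uedges := uedges G - {(a, b), (b, a)} \<rparr>"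

definition meek_R1 :: "'a pdag \<Rightarrow> 'a \<Rightarrow> 'a \<Rightarrow> bool" where
  "meek_R1 G a b \<longleftrightarrow> und G a b \<and> (\<exists>c. (c, a) \<in> dedges G \<and> c \<noteq> b \<and> \<not> adj G c b)"

definition meek_R2 :: "'a pdag \<Rightarrow> 'a \<Rightarrow> 'a \<Rightarrow> bool" where
  "meek_R2 G a b \<longleftrightarrow> und G a b \<and> (\<exists>c. (a, c) \<in> dedges G \<and> (c, b) \<in> dedges G)"

definition meek_R3 :: "'a pdag \<Rightarrow> 'a \<Rightarrow> 'a \<Rightarrow> bool" where
  "meek_R3 G a b \<longleftrightarrow> und G a b \<and> (\<exists>c d. und G a c \<and> (c, b) \<in> dedges G
       \<and> und G a d \<and> (d, b) \<in> dedges G \<and> c \<noteq> d \<and> \<not> adj G c d)"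

definition meek_R4 :: "'a pdag \<Rightarrow> 'a \<Rightarrow> 'a \<Rightarrow> bool" where
  "meek_R4 G a b \<longleftrightarrow> und G a b \<and> (\<exists>c d. und G a c \<and> (c, d) \<in> dedges G
       \<and> (d, b) \<in> dedges G \<and> adj G a d \<and> c \<noteq> b \<and> \<not> adj G c b)"

definition meek_step :: "'a pdag \<Rightarrow> 'a pdag \<Rightarrow> bool" where
  "meek_step G G' \<longleftrightarrow> (\<exists>a b. (meek_R1 G a b \<or> meek_R2 G a b \<or> meek_R3 G a b \<or> meek_R4 G a b)
                          \<and> G' = orient_edge G a b)"

definition meek_closure :: "'a pdag \<Rightarrow> 'a pdag \<Rightarrow> bool" where
  "meek_closure G G' \<longleftrightarrow> meek_step\<^sup>*\<^sup>* G G' \<and> \<not> (\<exists>G''. meek_step G' G'')"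

definition orient_set :: "'a pdag \<Rightarrow> ('a \<times> 'a) set \<Rightarrow> 'a pdag" where
  "orient_set G Or = G \<lparr> dedges := dedges G \<union> Or, uedges := uedges G - (Or \<union> Or\<inverse>) \<rparr>"

text \<open>G is an MPDAG: take the CPDAG of (the Markov equivalence class of) a DAG D,
  orient some of its undirected edges (consistently with a member of the class,
  i.e. background knowledge consistent with the CPDAG), close under Meek's rules,
  and the result has no directed cycle.\<close>
definition is_mpdag :: "'a pdag \<Rightarrow> bool" where
  "is_mpdag G \<longleftrightarrow> (\<exists>D Or. is_dag D \<and> Or \<subseteq> uedges (cpdag D) \<and> Or \<subseteq> dedges D
       \<and> meek_closure (orient_set (cpdag D) Or) G) \<and> acyclic (dedges G)"

definition is_path :: "'a pdag \<Rightarrow> 'a list \<Rightarrow> bool" where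
  "is_path G p \<longleftrightarrow> p \<noteq> [] \<and> distinct p \<and> set p \<subseteq> nodes G
      \<and> (\<forall>i. Suc i < length p \<longrightarrow> adj G (p ! i) (p ! Suc i))"

definition is_directed_path :: "'a pdag \<Rightarrow> 'a list \<Rightarrow> bool" where
  "is_directed_path G q \<longleftrightarrow> q \<noteq> [] \<and> distinct q \<and> set q \<subseteq> nodes G
      \<and> (\<forall>i. Suc i < length q \<longrightarrow> (q ! i, q ! Suc i) \<in> dedges G)"

definition possibly_causal :: "'a pdag \<Rightarrow> 'a list \<Rightarrow> bool" where
  "possibly_causal G p \<longleftrightarrow> (\<forall>i j. i < j \<and> j < length p \<longrightarrow> (p ! j, p ! i) \<notin> dedges G)"

end

theory Submission
  imports Defs
begin

fun pcl :: "'a pdag \<Rightarrow> 'a list \<Rightarrow> bool" where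
  "pcl G [] = True"
| "pcl G (x # xs) = (x \<notin> set xs \<and> (xs \<noteq> [] \<longrightarrow> adj G x (hd xs))
      \<and> (\<forall>y\<in>set xs. (y, x) \<notin> dedges G) \<and> pcl G xs)"

lemma pcl_append: "pcl G (xs @ ys) \<Longrightarrow> pcl G xs \<and> pcl G ys"
  by (induction xs) auto

lemma pcl_distinct: "pcl G xs \<Longrightarrow> distinct xs"
  by (induction xs) auto

lemma pcl_back: "pcl G xs \<Longrightarrow> i < j \<Longrightarrow> j < length xs \<Longrightarrow> (xs ! j, xs ! i) \<notin> dedges G"
proof (induction xs arbitrary: i j)
  case Nil
  then show ?case by simp
next
  case (Cons x xs)
  then obtain j' where j: "j = Suc j'" by (cases j) auto
  show ?case
  proof (cases i)
    case 0
    then show ?thesis using Cons.prems j by auto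
  next
    case (Suc i')
    then show ?thesis using Cons j by auto
  qed
qed

lemma pcl_of_idx:
  assumes "distinct r" "\<forall>i. Suc i < length r \<longrightarrow> adj G (r!i) (r!Suc i)"
    "\<forall>i j. i<j \<and> j<length r \<longrightarrow> (r!j, r!i) \<notin> dedges G"
  shows "pcl G r"
  using assms
proof (induction r)
  case Nil
  then show ?case by simp
next
  case (Cons x xs)
  have a: "xs \<noteq> [] \<longrightarrow> adj G x (hd xs)"
    using Cons.prems(2)[rule_format, of 0] by (cases xs) auto
  have b: "\<forall>y\<in>set xs. (y, x) \<notin> dedges G"
  proof
    fix y assume "y \<in> set xs"
    then obtain k where "k < length xs" "y = xs ! k" by (auto simp: in_set_conv_nth)
    then show "(y, x) \<notin> dedges G" using Cons.prems(3)[rule_format, of 0 "Suc k"] by auto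
  qed
  have c: "pcl G xs"
  proof (rule Cons.IH)
    show "distinct xs" using Cons.prems by simp
    show "\<forall>i. Suc i < length xs \<longrightarrow> adj G (xs ! i) (xs ! Suc i)"
      using Cons.prems(2) by (metis Suc_less_eq length_Cons nth_Cons_Suc)
    show "\<forall>i j. i < j \<and> j < length xs \<longrightarrow> (xs ! j, xs ! i) \<notin> dedges G"
      using Cons.prems(3) by (metis Suc_less_eq length_Cons nth_Cons_Suc)
  qed
  show ?case using a b c Cons.prems(1) by simp
qed

lemma dpath_rtrancl:
  assumes "is_directed_path G q"
  shows "(hd q, last q) \<in> (dedges G)\<^sup>*"
proof -
  have q: "q \<noteq> []" "\<forall>i. Suc i < length q \<longrightarrow> (q ! i, q ! Suc i) \<in> dedges G"
    using assms unfolding is_directed_path_def by auto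
  have "\<forall>k. k < length q \<longrightarrow> (hd q, q ! k) \<in> (dedges G)\<^sup>*"
  proof
    fix k show "k < length q \<longrightarrow> (hd q, q ! k) \<in> (dedges G)\<^sup>*"
    proof (induction k)
      case 0
      then show ?case using q by (simp add: hd_conv_nth)
    next
      case (Suc k)
      then show ?case using q by (meson Suc_lessD rtrancl.rtrancl_into_rtrancl)
    qed
  qed
  then show ?thesis using q by (simp add: last_conv_nth)
qed


lemma sym_cpdag: "sym (uedges (cpdag D))"
  unfolding cpdag_def sym_def adj_def by auto

lemma sym_orient_set: "sym (uedges G) \<Longrightarrow> sym (uedges (orient_set G Or))"
  unfolding orient_set_def sym_def by auto

lemma sym_step: "meek_step G G' \<Longrightarrow> sym (uedges G) \<Longrightarrow> sym (uedges G')"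
  unfolding meek_step_def orient_edge_def sym_def by auto

lemma sym_steps: "meek_step\<^sup>*\<^sup>* G G' \<Longrightarrow> sym (uedges G) \<Longrightarrow> sym (uedges G')"
  by (induction rule: rtranclp_induct) (auto intro: sym_step)

lemma mpdag_props:
  assumes "is_mpdag G"
  shows "sym (uedges G)" "acyclic (dedges G)"
    "\<And>a b. \<not> meek_R1 G a b" "\<And>a b. \<not> meek_R2 G a b" "\<And>a b. \<not> meek_R4 G a b"
proof -
  obtain D Or where cl: "meek_closure (orient_set (cpdag D) Or) G" and ac: "acyclic (dedges G)"
    using assms unfolding is_mpdag_def by blast
  show "sym (uedges G)" using cl unfolding meek_closure_def
    by (meson sym_cpdag sym_orient_set sym_steps)
  show "acyclic (dedges G)" by (rule ac)
  have ns: "\<not> meek_step G G''" for G'' using cl unfolding meek_closure_def by blast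
  fix a b
  show "\<not> meek_R1 G a b" "\<not> meek_R2 G a b" "\<not> meek_R4 G a b"
    using ns[of "orient_edge G a b"] unfolding meek_step_def by blast+
qed


lemma core:
  assumes sy: "sym (uedges G)" and ac: "acyclic (dedges G)"
    and n1: "\<And>a b. \<not> meek_R1 G a b" and n2: "\<And>a b. \<not> meek_R2 G a b"
    and n4: "\<And>a b. \<not> meek_R4 G a b"
  shows "pcl G r \<Longrightarrow> 2 \<le> length r \<Longrightarrow> (last r, hd r) \<in> (dedges G) ^^ n \<Longrightarrow> False"
proof (induction "length r" arbitrary: r n rule: less_induct)
  case less
  have outer: "\<And>r' n'. length r' < length r \<Longrightarrow> pcl G r' \<Longrightarrow> 2 \<le> length r'
      \<Longrightarrow> (last r', hd r') \<in> (dedges G) ^^ n' \<Longrightarrow> False"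
    using less.hyps by blast
  have outer': "\<And>r'. length r' < length r \<Longrightarrow> pcl G r' \<Longrightarrow> 2 \<le> length r'
      \<Longrightarrow> (last r', hd r') \<in> (dedges G)\<^sup>+ \<Longrightarrow> False"
    using outer by (meson trancl_power)
  have acy: "(x, x) \<notin> (dedges G)\<^sup>+" for x using ac unfolding acyclic_def by blast
  have usym: "(a, b) \<in> uedges G \<Longrightarrow> (b, a) \<in> uedges G" for a b
    using sy unfolding sym_def by blast
  have "\<forall>s. length s = length r \<longrightarrow> pcl G s \<longrightarrow> (last s, hd s) \<in> (dedges G) ^^ n \<longrightarrow> False"
  proof (induction n rule: less_induct)
    case (less n)
    show ?case
    proof (intro allI impI)
      fix s assume len: "length s = length r" and pc: "pcl G s"
        and pw: "(last s, hd s) \<in> (dedges G) ^^ n"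
      have len2: "2 \<le> length s" using len \<open>2 \<le> length r\<close> by simp
      then obtain r0 r1 rest where s: "s = r0 # r1 # rest"
        by (metis One_nat_def Suc_1 Suc_le_length_iff le_SucE le_refl)
      define rm where "rm = last s"
      have rm: "rm = last (r1 # rest)" "rm \<in> set (r1 # rest)" using s rm_def by auto
      have dist: "distinct s" using pc by (rule pcl_distinct)
      have r0rm: "r0 \<noteq> rm" using dist rm s by auto
      have P1: "(y, r0) \<notin> (dedges G)\<^sup>+" if y: "y \<in> set s" "y \<noteq> r0" "y \<noteq> rm" for y
      proof
        assume yr: "(y, r0) \<in> (dedges G)\<^sup>+"
        obtain xs ys where sp: "s = xs @ y # ys" using y(1) by (meson split_list)
        have xs: "xs \<noteq> []" using sp s y(2) by (cases xs) auto
        have ys: "ys \<noteq> []" using sp y(3) rm_def by auto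
        have "pcl G (xs @ [y])" using pc sp pcl_append[of G "xs @ [y]" ys] by simp
        moreover have "length (xs @ [y]) < length r" using sp ys len by (cases ys) auto
        moreover have "2 \<le> length (xs @ [y])" using xs by (cases xs) auto
        moreover have "hd (xs @ [y]) = r0" using xs sp s by (cases xs) auto
        ultimately show False using outer' yr by fastforce
      qed
      have P2: "(rm, y) \<notin> (dedges G)\<^sup>+" if y: "y \<in> set s" "y \<noteq> r0" "y \<noteq> rm" for y
      proof
        assume yr: "(rm, y) \<in> (dedges G)\<^sup>+"
        obtain xs ys where sp: "s = xs @ y # ys" using y(1) by (meson split_list)
        have xs: "xs \<noteq> []" using sp s y(2) by (cases xs) auto
        have ys: "ys \<noteq> []" using sp y(3) rm_def by auto
        have "pcl G (y # ys)" using pc sp pcl_append[of G xs "y # ys"] by simp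
        moreover have "length (y # ys) < length r" using sp xs len by (cases xs) auto
        moreover have "2 \<le> length (y # ys)" using ys by (cases ys) auto
        moreover have "last (y # ys) = rm" using ys sp rm_def by simp
        ultimately show False using outer' yr by fastforce
      qed
      have pwn: "(rm, r0) \<in> (dedges G) ^^ n" using pw rm_def s by simp
      have bkz: "(y, r0) \<notin> dedges G" if "y \<in> set (r1 # rest)" for y
        using pc s that by auto
      have bkone: "(y, r1) \<notin> dedges G" if "y \<in> set rest" for y
        using pc s that by simp
      have adj01: "adj G r0 r1" using pc s by simp
      obtain n' where nn: "n = Suc n'" using pwn r0rm by (cases n) auto
      obtain c where rc: "(rm, c) \<in> (dedges G) ^^ n'" and cr0: "(c, r0) \<in> dedges G"
        using pwn nn relpow_Suc_E by metis
      have n'0: "n' \<noteq> 0"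
      proof
        assume "n' = 0" then have "c = rm" using rc by simp
        then show False using cr0 bkz rm(2) by blast
      qed
      have rcp: "(rm, c) \<in> (dedges G)\<^sup>+" using rc n'0 trancl_power by blast
      have r1nr0: "r1 \<noteq> r0" using dist s by auto
      have notdesc1: "(rm, r1) \<notin> (dedges G)\<^sup>+"
      proof (cases "rest = []")
        case True then show ?thesis using rm acy by simp
      next
        case False
        then have "r1 \<noteq> rm" using dist s rm by (cases rest rule: rev_cases) auto
        then show ?thesis using P2[of r1] s r1nr0 by simp
      qed
      have n01: "(r0, r1) \<notin> dedges G"
        using notdesc1 rcp cr0 by (meson trancl_into_trancl)
      have u01: "(r0, r1) \<in> uedges G" "(r1, r0) \<in> uedges G"
        using adj01 n01 bkz[of r1] usym unfolding adj_def by auto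
      have cr1: "c \<noteq> r1" using cr0 bkz[of r1] by auto
      have adjc1: "adj G c r1" using n1[of r0 r1] u01 cr0 cr1 unfolding meek_R1_def und_def by blast
      have n1c: "(r1, c) \<notin> dedges G" using n2[of r1 r0] u01 cr0 unfolding meek_R2_def und_def by blast
      have nc1: "(c, r1) \<notin> dedges G" using notdesc1 rcp by (meson trancl_into_trancl)
      have uc1: "(c, r1) \<in> uedges G" "(r1, c) \<in> uedges G"
        using adjc1 n1c nc1 usym unfolding adj_def by auto
      show False
      proof (cases "rest = []")
        case True
        then have rmr1: "rm = r1" using rm by simp
        have "pcl G [c, r1]" using cr1 adjc1 n1c by simp
        moreover have "length [c, r1] = length r" using len s True by simp
        moreover have "n' < n" using nn by simp
        ultimately show False using less.IH[of n'] rc rmr1 by fastforce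
      next
        case False
        have r1rm: "r1 \<noteq> rm" using False dist s rm by (cases rest rule: rev_cases) auto
        have rmset: "rm \<in> set rest" using False rm by simp
        show False
        proof (cases "(rm, c) \<in> dedges G")
          case False
          have cnot: "c \<notin> set (r1 # rest)"
          proof
            assume cin: "c \<in> set (r1 # rest)"
            show False
            proof (cases "c = rm")
              case True then show ?thesis using rcp acy by simp
            next
              case False
              have "c \<noteq> r0" using cr0 acy by auto
              then show ?thesis using P1[of c] cin False s cr0 by auto
            qed
          qed
          have bk: "(y, c) \<notin> dedges G" if yin: "y \<in> set (r1 # rest)" for y
          proof
            assume yc: "(y, c) \<in> dedges G"
            show False
            proof (cases "y = rm")
              case True then show ?thesis using yc False by simp
            next
              case ne: False
              have "y \<noteq> r0" using yin dist s by auto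
              moreover have "(y, r0) \<in> (dedges G)\<^sup>+" using yc cr0 by auto
              ultimately show ?thesis using P1[of y] yin ne s by auto
            qed
          qed
          have "pcl G (c # r1 # rest)" using cnot adjc1 bk pc s by simp
          moreover have "last (c # r1 # rest) = rm" using rm by simp
          moreover have "length (c # r1 # rest) = length r" using len s by simp
          moreover have "n' < n" using nn by simp
          ultimately show False using less.IH[of n'] rc by fastforce
        next
          case True
          have "adj G rm r1" using n1[of c r1] uc1 True r1rm unfolding meek_R1_def und_def by blast
          moreover have "(rm, r1) \<notin> dedges G" using bkone rmset by blast
          moreover have "(r1, rm) \<notin> dedges G"
          proof
            assume "(r1, rm) \<in> dedges G"
            then have "(r1, r0) \<in> (dedges G)\<^sup>+" using True cr0 by auto
            then show False using P1[of r1] s r1nr0 r1rm by auto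
          qed
          ultimately have u1m: "(r1, rm) \<in> uedges G" unfolding adj_def using usym by auto
          have adj0m: "adj G rm r0"
            using n4[of r1 r0] u01 u1m True cr0 adjc1 r0rm unfolding meek_R4_def und_def
            by (metis adj_def)
          have "(r0, rm) \<notin> dedges G"
          proof
            assume "(r0, rm) \<in> dedges G"
            then have "(r0, r0) \<in> (dedges G)\<^sup>+" using True cr0 by auto
            then show False using acy by simp
          qed
          moreover have "(rm, r0) \<notin> dedges G" using bkz rm(2) by blast
          ultimately have "adj G r0 rm" using adj0m unfolding adj_def by auto
          then have "pcl G [r0, rm]" using r0rm \<open>(rm, r0) \<notin> dedges G\<close> by simp
          moreover have "length [r0, rm] < length r" using len s False by (cases rest) auto
          ultimately show False using outer[of "[r0, rm]" n] pwn by simp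
        qed
      qed
    qed
  qed
  then show ?case using less.prems by blast
qed


theorem mainTheorem17:
  fixes G :: "'a pdag" and p :: "'a list"
  assumes "is_mpdag G" and "is_path G p"
  shows "possibly_causal G p \<longleftrightarrow>
    (\<forall>i j. i < j \<and> j < length p \<longrightarrow>
       \<not> (\<exists>q. is_directed_path G q \<and> hd q = p ! j \<and> last q = p ! i))"
proof
  assume pcA: "possibly_causal G p"
  show "\<forall>i j. i < j \<and> j < length p \<longrightarrow>
       \<not> (\<exists>q. is_directed_path G q \<and> hd q = p ! j \<and> last q = p ! i)"
  proof (intro allI impI notI)
    fix i j assume ij: "i < j \<and> j < length p"
      and "\<exists>q. is_directed_path G q \<and> hd q = p ! j \<and> last q = p ! i"
    then obtain q where q: "is_directed_path G q" "hd q = p ! j" "last q = p ! i" by blast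
    have dp: "distinct p" using assms(2) unfolding is_path_def by simp
    have ne: "p ! j \<noteq> p ! i" using dp ij by (simp add: nth_eq_iff_index_eq)
    have "(p ! j, p ! i) \<in> (dedges G)\<^sup>*" using dpath_rtrancl[OF q(1)] q by simp
    then have "(p ! j, p ! i) \<in> (dedges G)\<^sup>+" using ne by (simp add: rtrancl_eq_or_trancl)
    then obtain n where pn: "(p ! j, p ! i) \<in> (dedges G) ^^ n" using trancl_power by blast
    have pclp: "pcl G p"
      by (rule pcl_of_idx) (use assms(2) pcA in \<open>auto simp: is_path_def possibly_causal_def\<close>)
    define r where "r = take (j - i + 1) (drop i p)"
    have "pcl G (drop i p)" using pclp pcl_append[of G "take i p" "drop i p"] by simp
    then have pr: "pcl G r" unfolding r_def
      using pcl_append[of G "take (j - i + 1) (drop i p)" "drop (j - i + 1) (drop i p)"]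
      by (simp only: append_take_drop_id)
    have lr: "length r = j - i + 1" using ij unfolding r_def by auto
    have hr: "hd r = p ! i" using ij unfolding r_def by (simp add: hd_conv_nth)
    have "last r = r ! (j - i)" using lr by (metis add_diff_cancel_right' last_conv_nth list.size(3) zero_neq_one add_is_0)
    then have lsr: "last r = p ! j" using ij unfolding r_def by simp
    have l2: "2 \<le> length r" using lr ij by (simp add: Suc_le_eq)
    have pn': "(last r, hd r) \<in> (dedges G) ^^ n" using pn hr lsr by simp
    show False
      using core[OF mpdag_props(1,2)[OF assms(1)] mpdag_props(3)[OF assms(1)]
          mpdag_props(4)[OF assms(1)] mpdag_props(5)[OF assms(1)] pr]
        l2 pn' by blast
  qed
next
  assume H: "\<forall>i j. i < j \<and> j < length p \<longrightarrow>
       \<not> (\<exists>q. is_directed_path G q \<and> hd q = p ! j \<and> last q = p ! i)"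
  show "possibly_causal G p"
    unfolding possibly_causal_def
  proof (intro allI impI notI)
    fix i j assume ij: "i < j \<and> j < length p" and e: "(p ! j, p ! i) \<in> dedges G"
    have dp: "distinct p" "set p \<subseteq> nodes G" using assms(2) unfolding is_path_def by auto
    have ne: "p ! j \<noteq> p ! i" using dp ij by (simp add: nth_eq_iff_index_eq)
    have sn: "set [p ! j, p ! i] \<subseteq> nodes G" using dp(2) ij by auto
    have ed: "\<forall>k. Suc k < length [p ! j, p ! i] \<longrightarrow>
        ([p ! j, p ! i] ! k, [p ! j, p ! i] ! Suc k) \<in> dedges G"
    proof (intro allI impI)
      fix k assume "Suc k < length [p ! j, p ! i]"
      then have "k = 0" by simp
      then show "([p ! j, p ! i] ! k, [p ! j, p ! i] ! Suc k) \<in> dedges G" using e by simp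
    qed
    have "is_directed_path G [p ! j, p ! i]"
      unfolding is_directed_path_def using ne sn ed by simp
    moreover have "\<not> (\<exists>q. is_directed_path G q \<and> hd q = p ! j \<and> last q = p ! i)"
      using H ij by blast
    ultimately show False by (metis last_ConsL last_ConsR list.sel(1) list.discI)
  qed
qed

end
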